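(* Assume (S1) and let $\beta$ be given by (K1) or (K2). For any $J\in\mathbb Z^+$, any $\Delta t>0$, any $N$ (with $N\Delta t=T\le\infty$) and any given $\vec U^0,\vec U^1\in\mathbb R^{J-1}$, the fully discrete scheme (FD) has a solution $\vec U^2,\vec U^3,\dots,\vec U^N$, i.e. at each level $n\ge2$, given $\vec U^0,\dots,\vec U^{n-1}$, the (nonlinear) equation (FD) for $\vec U^n$ has at least one solution in $\mathbb R^{J-1}$.
   Context: Kernels: (K1) $\beta(t)=e^{-\sigma t}t^{\alpha-1}\cos(\gamma t)/\Gamma(\alpha)$ with $\sigma>1$, $0\le\gamma\le\sigma$, $\alpha\in\{1/2,1\}$; (K2) $\beta(t)=e^{-\sigma t}t^{\alpha-1}/\Gamma(\alpha)$ with $\sigma>1$, $0<\alpha\le1$. $K(t)=\int_t^\infty\beta(s)ds$, $K_0=K(0)<1$, $\mu_0=1-K_0$. Assumption (S1): $G:[0,\infty)\to(0,\infty)$ is continuous with $G(v)\ge g_0>0$ for all $v\ge0$, and $G$ is bounded on bounded sets. Grid: $h=1/J$, $x_j=jh$. For $\vec W=(W_1,\dots,W_{J-1})^\top$ extended by $W_0=W_J=0$, $W_{-1}=-W_1$, $W_{J+1}=-W_{J-1}$: $(W_j)_{x\bar x}=(W_{j+1}-2W_j+W_{j-1})/h^2$, $(W_j)_{xx\bar x\bar x}=(W_{j+2}-4W_{j+1}+6W_j-4W_{j-1}+W_{j-2})/h^4$. $\langle\vec V,\vec W\rangle=h\sum_{j=1}^{J-1}V_jW_j$, $\|\vec W\|=\langle\vec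 W,\vec W\rangle^{1/2}$. Time grid: $t_n=n\Delta t$, $\delta_t U^n=(U^n-U^{n-1})/\Delta t$, $\delta_t^2U^n=\delta_t(\delta_tU^n)$. Weights $w_{np}=\frac1{\Delta t}\int_{t_{n-1}}^{t_n}\int_{t_{p-1}}^{\min(t,t_p)}K(t-s)\,ds\,dt>0$, $1\le p\le n$. Fully discrete scheme (FD): for $n\ge2$, $j=1,\dots,J-1$: $\delta_t^2U_j^n+G(\|\vec U^n_{x\bar x}\|^2)\delta_tU_j^n+\mu_0(U_j^n)_{xx\bar x\bar x}+\sum_{p=1}^n w_{np}(\delta_tU_j^p)_{xx\bar x\bar x}=f(x_j,t_n)-K(t_n)(U_j^0)_{xx\bar x\bar x}$, with boundary conventions $U_0^n=U_J^n=0$, $U_{-1}^n=-U_1^n$, $U_{J+1}^n=-U_{J-1}^n$. *)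

theory Defs
  imports "HOL-Analysis.Analysis"
begin

text \<open>Grid vectors \<open>W = (W_1,...,W_{J-1})\<close> are represented as functions \<open>nat \<Rightarrow> real\<close>;
only the values at indices \<open>1..J-1\<close> are used.  \<open>gext J W j\<close> is the extension to
integer indices \<open>j \<in> {-1..J+1}\<close> with \<open>W_0 = W_J = 0\<close>, \<open>W_{-1} = -W_1\<close>,
\<open>W_{J+1} = -W_{J-1}\<close>.\<close>

definition gext :: "nat \<Rightarrow> (nat \<Rightarrow> real) \<Rightarrow> int \<Rightarrow> real" where
  "gext J W j =
     (if j = -1 then - W 1
      else if j = int J + 1 then - W (J - 1)
      else if 1 \<le> j \<and> j \<le> int J - 1 then W (nat j)
      else 0)"

definition meshh :: "nat \<Rightarrow> real" where
  "meshh J = 1 / real J"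

definition dxx :: "nat \<Rightarrow> (nat \<Rightarrow> real) \<Rightarrow> nat \<Rightarrow> real" where
  "dxx J W j = (gext J W (int j + 1) - 2 * gext J W (int j) + gext J W (int j - 1)) / (meshh J)^2"

definition dxxxx :: "nat \<Rightarrow> (nat \<Rightarrow> real) \<Rightarrow> nat \<Rightarrow> real" where
  "dxxxx J W j = (gext J W (int j + 2) - 4 * gext J W (int j + 1) + 6 * gext J W (int j)
                   - 4 * gext J W (int j - 1) + gext J W (int j - 2)) / (meshh J)^4"

definition dinner :: "nat \<Rightarrow> (nat \<Rightarrow> real) \<Rightarrow> (nat \<Rightarrow> real) \<Rightarrow> real" where
  "dinner J V W = meshh J * (\<Sum>j = 1..J - 1. V j * W j)"

definition dnorm :: "nat \<Rightarrow> (nat \<Rightarrow> real) \<Rightarrow> real" where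
  "dnorm J W = sqrt (dinner J W W)"

definition Kker :: "(real \<Rightarrow> real) \<Rightarrow> real \<Rightarrow> real" where
  "Kker \<beta> t = (LBINT s:{t..}. \<beta> s)"

definition kernel_K1 :: "(real \<Rightarrow> real) \<Rightarrow> bool" where
  "kernel_K1 \<beta> \<longleftrightarrow> (\<exists>\<sigma> \<gamma> \<alpha>. \<sigma> > 1 \<and> 0 \<le> \<gamma> \<and> \<gamma> \<le> \<sigma> \<and> \<alpha> \<in> {1/2, 1} \<and>
      \<beta> = (\<lambda>t. exp (- \<sigma> * t) * t powr (\<alpha> - 1) * cos (\<gamma> * t) / Gamma \<alpha>))"

definition kernel_K2 :: "(real \<Rightarrow> real) \<Rightarrow> bool" where
  "kernel_K2 \<beta> \<longleftrightarrow> (\<exists>\<sigma> \<alpha>. \<sigma> > 1 \<and> 0 < \<alpha> \<and> \<alpha> \<le> 1 \<and>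
      \<beta> = (\<lambda>t. exp (- \<sigma> * t) * t powr (\<alpha> - 1) / Gamma \<alpha>))"

definition assm_S1 :: "(real \<Rightarrow> real) \<Rightarrow> bool" where
  "assm_S1 G \<longleftrightarrow> continuous_on {0..} G \<and> (\<forall>v\<ge>0. G v > 0) \<and>
     (\<exists>g0 > 0. \<forall>v\<ge>0. G v \<ge> g0) \<and>
     (\<forall>B. \<exists>M. \<forall>v \<in> {0..B}. \<bar>G v\<bar> \<le> M)"

definition wts :: "(real \<Rightarrow> real) \<Rightarrow> real \<Rightarrow> nat \<Rightarrow> nat \<Rightarrow> real" where
  "wts \<beta> dt n p = (1 / dt) *
     (LBINT t = real (n - 1) * dt .. real n * dt.
        (LBINT s = real (p - 1) * dt .. min t (real p * dt). Kker \<beta> (t - s)))"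

definition dtU :: "real \<Rightarrow> (nat \<Rightarrow> nat \<Rightarrow> real) \<Rightarrow> nat \<Rightarrow> nat \<Rightarrow> real" where
  "dtU dt U n = (\<lambda>j. (U n j - U (n - 1) j) / dt)"

definition FD_level :: "(real \<Rightarrow> real) \<Rightarrow> (real \<Rightarrow> real) \<Rightarrow> (real \<Rightarrow> real \<Rightarrow> real) \<Rightarrow>
    nat \<Rightarrow> real \<Rightarrow> (nat \<Rightarrow> nat \<Rightarrow> real) \<Rightarrow> nat \<Rightarrow> bool" where
  "FD_level G \<beta> f J dt U n \<longleftrightarrow>
     (\<forall>j \<in> {1..J - 1}.
        (dtU dt U n j - dtU dt U (n - 1) j) / dt
        + G ((dnorm J (dxx J (U n)))^2) * dtU dt U n j
        + (1 - Kker \<beta> 0) * dxxxx J (U n) j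
        + (\<Sum>p = 1..n. wts \<beta> dt n p * dxxxx J (dtU dt U p) j)
        = f (real j * meshh J) (real n * dt) - Kker \<beta> (real n * dt) * dxxxx J (U 0) j)"

end

theory Submission
  imports Defs
begin


lemma gamma_integrable:
  fixes a :: real assumes a: "a > 0"
  shows "has_bochner_integral lborel (\<lambda>t. indicator {0..} t * t powr (a - 1) / exp t) (Gamma a)"
proof (rule has_bochner_integral_nn_integral)
  show "(\<lambda>t. indicator {0..} t * t powr (a - 1) / exp t) \<in> borel_measurable lborel" by measurable
  show "AE x in lborel. 0 \<le> indicator {0..} x * x powr (a - 1) / exp x" by (auto simp: indicator_def)
  show "0 \<le> Gamma a" using Gamma_real_pos[OF a] by simp
  show "(\<integral>\<^sup>+x. ennreal (indicator {0..} x * x powr (a - 1) / exp x) \<partial>lborel) = ennreal (Gamma a)"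
    using Gamma_conv_nn_integral_real[OF a] by simp
qed

lemma beta_props:
  assumes "kernel_K1 \<beta> \<or> kernel_K2 \<beta>"
  shows "\<exists>a>0. \<beta> \<in> borel_measurable borel \<and> (\<forall>s\<ge>0. \<bar>\<beta> s\<bar> \<le> s powr (a - 1) / exp s / Gamma a)"
  using assms
proof
  assume "kernel_K1 \<beta>"
  then obtain \<sigma> \<gamma> a where h: "\<sigma> > 1" "a \<in> {1/2, 1}"
      "\<beta> = (\<lambda>t. exp (- \<sigma> * t) * t powr (a - 1) * cos (\<gamma> * t) / Gamma a)"
    unfolding kernel_K1_def by blast
  have a: "a > 0" using h(2) by auto
  have G: "Gamma a > 0" using Gamma_real_pos[OF a] .
  have "\<bar>\<beta> s\<bar> \<le> s powr (a - 1) / exp s / Gamma a" if s: "s \<ge> 0" for s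
  proof -
    have "s \<le> \<sigma> * s" using mult_right_mono[of 1 \<sigma> s] h(1) s by simp
    then have e: "exp (- \<sigma> * s) \<le> exp (- s)" by simp
    have "\<bar>\<beta> s\<bar> = exp (- \<sigma> * s) * s powr (a - 1) * \<bar>cos (\<gamma> * s)\<bar> / Gamma a"
      using G by (simp add: h(3) abs_mult)
    also have "\<dots> \<le> exp (- s) * s powr (a - 1) * 1 / Gamma a"
      using G e by (intro divide_right_mono mult_mono) auto
    also have "\<dots> = s powr (a - 1) / exp s / Gamma a" by (simp add: exp_minus field_simps)
    finally show ?thesis .
  qed
  moreover have "\<beta> \<in> borel_measurable borel" unfolding h(3) by measurable
  ultimately show ?thesis using a by blast
next
  assume "kernel_K2 \<beta>"
  then obtain \<sigma> a where h: "\<sigma> > 1" "0 < a"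
      "\<beta> = (\<lambda>t. exp (- \<sigma> * t) * t powr (a - 1) / Gamma a)"
    unfolding kernel_K2_def by blast
  have a: "a > 0" using h(2) by auto
  have G: "Gamma a > 0" using Gamma_real_pos[OF a] .
  have "\<bar>\<beta> s\<bar> \<le> s powr (a - 1) / exp s / Gamma a" if s: "s \<ge> 0" for s
  proof -
    have "s \<le> \<sigma> * s" using mult_right_mono[of 1 \<sigma> s] h(1) s by simp
    then have e: "exp (- \<sigma> * s) \<le> exp (- s)" by simp
    have "\<bar>\<beta> s\<bar> = exp (- \<sigma> * s) * s powr (a - 1) / Gamma a"
      using G by (simp add: h(3) abs_mult)
    also have "\<dots> \<le> exp (- s) * s powr (a - 1) / Gamma a"
      using G e by (intro divide_right_mono mult_mono) auto
    also have "\<dots> = s powr (a - 1) / exp s / Gamma a" by (simp add: exp_minus field_simps)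
    finally show ?thesis .
  qed
  moreover have "\<beta> \<in> borel_measurable borel" unfolding h(3) by measurable
  ultimately show ?thesis using a by blast
qed

lemma Kker_lower:
  assumes "kernel_K1 \<beta> \<or> kernel_K2 \<beta>" and r: "r \<ge> 0"
  shows "Kker \<beta> r \<ge> Kker \<beta> 0 - 1"
proof -
  obtain a where a: "a > 0" and meas: "\<beta> \<in> borel_measurable borel"
    and bnd: "\<And>s. s \<ge> 0 \<Longrightarrow> \<bar>\<beta> s\<bar> \<le> s powr (a - 1) / exp s / Gamma a"
    using beta_props[OF assms(1)] by blast
  have G: "Gamma a > 0" using Gamma_real_pos[OF a] .
  define g where "g = (\<lambda>t::real. indicator {0..} t * t powr (a - 1) / exp t / Gamma a)"
  have hg: "has_bochner_integral lborel g 1"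
    using has_bochner_integral_divide_zero[OF gamma_integrable[OF a], of "Gamma a"] G
    by (simp add: g_def)
  have gi: "integrable lborel g" using hg by (simp add: has_bochner_integral_iff)
  have gI: "integral\<^sup>L lborel g = 1" using hg by (simp add: has_bochner_integral_iff)
  have g0: "g t \<ge> 0" for t using G by (auto simp: g_def indicator_def)
  have sgi: "set_integrable lborel A g" if "A \<in> sets lborel" for A
    unfolding set_integrable_def using gi that by (intro integrable_mult_indicator) auto
  have sbi: "set_integrable lborel A \<beta>" if "A \<in> sets lborel" "A \<subseteq> {0..}" for A
  proof (rule set_integrable_bound[OF sgi[OF that(1)]])
    show "set_borel_measurable lborel A \<beta>" unfolding set_borel_measurable_def
      using meas that(1) by measurable
    show "AE x in lborel. x \<in> A \<longrightarrow> norm (\<beta> x) \<le> norm (g x)"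
    proof (intro AE_I2 impI)
      fix x assume "x \<in> A"
      then have "x \<ge> 0" using that(2) by auto
      then show "norm (\<beta> x) \<le> norm (g x)" using bnd[of x] G by (simp add: g_def)
    qed
  qed
  have "Kker \<beta> 0 = (LINT s:{0..<r}\<union>{r..}|lborel. \<beta> s)"
    unfolding Kker_def using r by (simp add: ivl_disj_un)
  also have "\<dots> = (LINT s:{0..<r}|lborel. \<beta> s) + Kker \<beta> r"
    unfolding Kker_def using r by (intro set_integral_Un sbi) auto
  finally have eq: "Kker \<beta> 0 = (LINT s:{0..<r}|lborel. \<beta> s) + Kker \<beta> r" .
  have "(LINT s:{0..<r}|lborel. \<beta> s) \<le> (LINT s:{0..<r}|lborel. g s)"
    using bnd by (intro set_integral_mono sbi sgi) (auto simp: g_def intro: abs_le_D1)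
  also have "\<dots> \<le> integral\<^sup>L lborel g"
    unfolding set_lebesgue_integral_def
    using g0 by (intro integral_mono gi integrable_mult_indicator) (auto simp: indicator_def)
  finally show ?thesis using eq gI by simp
qed

lemma interval_lower:
  fixes f :: "real \<Rightarrow> real"
  assumes ab: "a \<le> b" and m: "m \<le> 0" and f: "\<And>x. a < x \<Longrightarrow> x < b \<Longrightarrow> m \<le> f x"
  shows "m * (b - a) \<le> (LBINT x=a..b. f x)"
proof -
  have eq: "(LBINT x=a..b. f x) = (LINT x:{a<..<b}|lborel. f x)"
    using ab by (simp add: interval_lebesgue_integral_def)
  have ci: "set_integrable lborel {a<..<b} (\<lambda>_. m)" using integrable_real_indicator[of "{a<..<b}" lborel]
    unfolding set_integrable_def using ab by (simp add: integrable_real_indicator)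
  have cv: "(LINT x:{a<..<b}|lborel. m) = m * (b - a)"
    using ab by (subst set_integral_const) auto
  show ?thesis
  proof (cases "set_integrable lborel {a<..<b} f")
    case True
    have "(LINT x:{a<..<b}|lborel. m) \<le> (LINT x:{a<..<b}|lborel. f x)"
      using f by (intro set_integral_mono ci True) auto
    then show ?thesis using eq cv by simp
  next
    case False
    then have "(LINT x:{a<..<b}|lborel. f x) = 0"
      unfolding set_lebesgue_integral_def set_integrable_def
      by (rule not_integrable_integral_eq)
    moreover have "m * (b - a) \<le> 0" using m ab by (simp add: mult_nonpos_nonneg)
    ultimately show ?thesis using eq by simp
  qed
qed

lemma wts_lower:
  assumes kern: "kernel_K1 \<beta> \<or> kernel_K2 \<beta>" and K0: "Kker \<beta> 0 < 1"
    and dt: "dt > 0" and n: "n \<ge> 1"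
  shows "wts \<beta> dt n n \<ge> (Kker \<beta> 0 - 1) * dt"
proof -
  define m where "m = Kker \<beta> 0 - 1"
  have m0: "m \<le> 0" using K0 by (simp add: m_def)
  define a where "a = real (n - 1) * dt"
  define b where "b = real n * dt"
  have ba: "b - a = dt" using n by (simp add: a_def b_def of_nat_diff algebra_simps)
  have inner: "m * dt \<le> (LBINT s = a .. min t b. Kker \<beta> (t - s))"
    if t: "a < t" "t < b" for t
  proof -
    have "m * (t - a) \<le> (LBINT s = a .. t. Kker \<beta> (t - s))"
      using t m0 by (intro interval_lower) (auto simp: m_def intro!: Kker_lower[OF kern])
    moreover have "m * dt \<le> m * (t - a)" using t ba m0 by (intro mult_left_mono_neg) auto
    ultimately show ?thesis using t by (simp add: min_def)
  qed
  have "m * dt * (b - a) \<le> (LBINT t = a .. b. (LBINT s = a .. min t b. Kker \<beta> (t - s)))"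
    using ba dt m0 inner by (intro interval_lower) (auto simp: mult_nonpos_nonneg)
  then have "m * dt * dt \<le> dt * wts \<beta> dt n n"
    unfolding wts_def a_def b_def using ba dt by (simp add: a_def b_def)
  then show ?thesis using dt by (simp add: m_def)
qed



lemma solve_coercive:
  fixes M :: "nat \<Rightarrow> nat \<Rightarrow> real"
  assumes "finite I" "\<alpha> > 0"
    and "\<forall>x. (\<Sum>i\<in>I. \<Sum>j\<in>I. x i * M i j * x j) \<ge> \<alpha> * (\<Sum>i\<in>I. (x i)^2)"
  shows "\<exists>x. \<forall>i\<in>I. (\<Sum>j\<in>I. M i j * x j) = b i"
  using assms
proof (induction I arbitrary: M b rule: finite_induct)
  case empty
  then show ?case by simp
next
  case (insert k I)
  note fin = insert.hyps(1) and kI = insert.hyps(2)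
  have coer: "\<And>x. (\<Sum>i\<in>insert k I. \<Sum>j\<in>insert k I. x i * M i j * x j) \<ge> \<alpha> * (\<Sum>i\<in>insert k I. (x i)^2)"
    using insert.prems by blast
  define d where "d = M k k"
  have "d \<ge> \<alpha>"
  proof -
    define e where "e = (\<lambda>j::nat. if j = k then (1::real) else 0)"
    have e0: "\<And>j. j \<in> I \<Longrightarrow> e j = 0" using kI by (auto simp: e_def)
    have "(\<Sum>i\<in>insert k I. \<Sum>j\<in>insert k I. e i * M i j * e j) = d"
      using fin kI e0 by (simp add: e_def d_def)
    moreover have "(\<Sum>i\<in>insert k I. (e i)^2) = 1"
      using fin kI e0 by (simp add: e_def)
    ultimately show ?thesis using coer[of e] by simp
  qed
  then have d: "d > 0" using insert.prems by simp
  define M' where "M' = (\<lambda>i j. M i j - M i k * M k j / d)"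
  have coer': "\<forall>x. (\<Sum>i\<in>I. \<Sum>j\<in>I. x i * M' i j * x j) \<ge> \<alpha> * (\<Sum>i\<in>I. (x i)^2)"
  proof
    fix x :: "nat \<Rightarrow> real"
    define q where "q = (\<Sum>j\<in>I. M k j * x j)"
    define p where "p = (\<Sum>i\<in>I. x i * M i k)"
    define Q where "Q = (\<Sum>i\<in>I. \<Sum>j\<in>I. x i * M i j * x j)"
    define t where "t = - q / d"
    define y where "y = x(k := t)"
    have yI: "\<And>j. j \<in> I \<Longrightarrow> y j = x j" using kI by (auto simp: y_def)
    have yk: "y k = t" by (simp add: y_def)
    have "(\<Sum>i\<in>insert k I. \<Sum>j\<in>insert k I. y i * M i j * y j)
        = t * d * t + t * q + p * t + Q"
    proof -
      have "(\<Sum>i\<in>insert k I. \<Sum>j\<in>insert k I. y i * M i j * y j)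
          = (\<Sum>j\<in>insert k I. y k * M k j * y j) + (\<Sum>i\<in>I. \<Sum>j\<in>insert k I. y i * M i j * y j)"
        using fin kI by simp
      also have "(\<Sum>j\<in>insert k I. y k * M k j * y j) = t * d * t + t * q"
        using fin kI yI yk by (simp add: d_def q_def sum_distrib_left mult.assoc)
      also have "(\<Sum>i\<in>I. \<Sum>j\<in>insert k I. y i * M i j * y j)
           = (\<Sum>i\<in>I. x i * M i k * t + (\<Sum>j\<in>I. x i * M i j * x j))"
        using fin kI yI yk by (intro sum.cong) auto
      also have "\<dots> = p * t + Q"
        by (simp add: sum.distrib p_def Q_def sum_distrib_right)
      finally show ?thesis by simp
    qed
    moreover have "(\<Sum>i\<in>insert k I. (y i)^2) = t^2 + (\<Sum>i\<in>I. (x i)^2)"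
      using fin kI yI yk by simp
    moreover have "(\<Sum>i\<in>I. \<Sum>j\<in>I. x i * M' i j * x j) = Q - p * q / d"
    proof -
      have "(\<Sum>i\<in>I. \<Sum>j\<in>I. x i * M' i j * x j)
          = (\<Sum>i\<in>I. \<Sum>j\<in>I. x i * M i j * x j - (x i * M i k) * (M k j * x j) / d)"
        by (simp add: M'_def algebra_simps)
      also have "\<dots> = Q - (\<Sum>i\<in>I. (x i * M i k) * q / d)"
        by (simp add: sum_subtractf Q_def q_def sum_divide_distrib[symmetric] sum_distrib_left)
      also have "\<dots> = Q - p * q / d"
        by (simp add: p_def sum_divide_distrib[symmetric] sum_distrib_right)
      finally show ?thesis .
    qed
    moreover have "t * d * t + t * q + p * t = - p * q / d"
      using d by (simp add: t_def field_simps power2_eq_square)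
    moreover have "\<alpha> * t^2 \<ge> 0" using insert.prems by simp
    ultimately show "(\<Sum>i\<in>I. \<Sum>j\<in>I. x i * M' i j * x j) \<ge> \<alpha> * (\<Sum>i\<in>I. (x i)^2)"
      using coer[of y] by (simp add: algebra_simps)
  qed
  define b' where "b' = (\<lambda>i. b i - M i k * b k / d)"
  obtain x where x: "\<forall>i\<in>I. (\<Sum>j\<in>I. M' i j * x j) = b' i"
    using insert.IH[OF insert.prems(1) coer'] by blast
  define q where "q = (\<Sum>j\<in>I. M k j * x j)"
  define t where "t = (b k - q) / d"
  define y where "y = x(k := t)"
  have yI: "\<And>j. j \<in> I \<Longrightarrow> y j = x j" using kI by (auto simp: y_def)
  have yk: "y k = t" by (simp add: y_def)
  have "\<forall>i\<in>insert k I. (\<Sum>j\<in>insert k I. M i j * y j) = b i"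
  proof
    fix i assume i: "i \<in> insert k I"
    have S: "(\<Sum>j\<in>insert k I. M i j * y j) = M i k * t + (\<Sum>j\<in>I. M i j * x j)"
      using fin kI yI yk by simp
    show "(\<Sum>j\<in>insert k I. M i j * y j) = b i"
    proof (cases "i = k")
      case True
      then show ?thesis using S d by (simp add: t_def q_def d_def field_simps)
    next
      case False
      then have iI: "i \<in> I" using i by simp
      have "(\<Sum>j\<in>I. M' i j * x j) = (\<Sum>j\<in>I. M i j * x j) - M i k * q / d"
        by (simp add: M'_def algebra_simps sum_subtractf q_def sum_distrib_left sum_divide_distrib[symmetric])
      then have "(\<Sum>j\<in>I. M i j * x j) = b i - M i k * b k / d + M i k * q / d"
        using x iI by (simp add: b'_def)
      then show ?thesis using S d by (simp add: t_def field_simps)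
    qed
  qed
  then show ?case by blast
qed



lemma young: "a > 0 \<Longrightarrow> (z::real) * r \<le> a / 2 * z^2 + r^2 / (2 * a)"
proof -
  assume a: "a > 0"
  have "0 \<le> (a * z - r)^2" by simp
  then have "2 * a * (z * r) \<le> a * (a * z^2) + r^2" by (simp add: power2_eq_square algebra_simps)
  then show ?thesis using a by (simp add: field_simps power2_eq_square)
qed

lemma young_sum:
  assumes "a > 0"
  shows "(\<Sum>i\<in>I. (z i::real) * r i) \<le> a / 2 * (\<Sum>i\<in>I. (z i)^2) + (\<Sum>i\<in>I. (r i)^2) / (2 * a)"
proof -
  have "(\<Sum>i\<in>I. z i * r i) \<le> (\<Sum>i\<in>I. a / 2 * (z i)^2 + (r i)^2 / (2 * a))"
    by (intro sum_mono young assms)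
  also have "\<dots> = a / 2 * (\<Sum>i\<in>I. (z i)^2) + (\<Sum>i\<in>I. (r i)^2) / (2 * a)"
    by (simp add: sum.distrib sum_distrib_left sum_divide_distrib)
  finally show ?thesis .
qed

lemma energy:
  fixes A :: "nat \<Rightarrow> nat \<Rightarrow> real"
  assumes psd: "\<forall>x. (\<Sum>i\<in>I. \<Sum>j\<in>I. x i * A i j * x j) \<ge> 0" and c: "c \<ge> 0"
    and eq: "\<forall>i\<in>I. e * z i + c * (\<Sum>k\<in>I. A i k * z k) = r i"
  shows "e * (\<Sum>i\<in>I. (z i)^2) \<le> (\<Sum>i\<in>I. z i * r i)"
proof -
  have "(\<Sum>i\<in>I. z i * r i) = (\<Sum>i\<in>I. e * (z i)^2 + c * (\<Sum>k\<in>I. z i * A i k * z k))"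
  proof (intro sum.cong refl)
    fix i assume i: "i \<in> I"
    have "z i * r i = z i * (e * z i + c * (\<Sum>k\<in>I. A i k * z k))" using eq i by simp
    also have "\<dots> = e * (z i)^2 + c * (\<Sum>k\<in>I. z i * A i k * z k)"
      by (simp add: power2_eq_square algebra_simps sum_distrib_left)
    finally show "z i * r i = e * (z i)^2 + c * (\<Sum>k\<in>I. z i * A i k * z k)" .
  qed
  also have "\<dots> = e * (\<Sum>i\<in>I. (z i)^2) + c * (\<Sum>i\<in>I. \<Sum>k\<in>I. z i * A i k * z k)"
    by (simp add: sum.distrib sum_distrib_left)
  finally show ?thesis using psd c by (simp add: mult_nonneg_nonneg)
qed

lemma abstract_exists:
  fixes A B :: "nat \<Rightarrow> nat \<Rightarrow> real" and \<Gamma> :: "real \<Rightarrow> real" and R u :: "nat \<Rightarrow> real"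
  assumes fin: "finite I" and a: "a > 0" and c: "c \<ge> 0" and hh: "hh \<ge> 0"
    and psd: "\<forall>x. (\<Sum>i\<in>I. \<Sum>j\<in>I. x i * A i j * x j) \<ge> 0"
    and \<Gamma>c: "continuous_on {0..} \<Gamma>" and \<Gamma>0: "\<forall>s\<ge>0. \<Gamma> s \<ge> 0"
  shows "\<exists>V. \<forall>j\<in>I. (a + \<Gamma> (hh * (\<Sum>j\<in>I. (\<Sum>k\<in>I. B j k * V k)^2))) * V j
                   + c * (\<Sum>k\<in>I. A j k * V k)
               = R j + \<Gamma> (hh * (\<Sum>j\<in>I. (\<Sum>k\<in>I. B j k * V k)^2)) * u j"
proof -
  define \<phi> where "\<phi> = (\<lambda>V::nat\<Rightarrow>real. hh * (\<Sum>j\<in>I. (\<Sum>k\<in>I. B j k * V k)^2))"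
  define N where "N = (\<lambda>x::nat\<Rightarrow>real. \<Sum>i\<in>I. (x i)^2)"
  define Mg where "Mg = (\<lambda>g i j. (if i = j then a + g else 0) + c * A i j)"
  have Mg_row: "(\<Sum>j\<in>I. Mg g i j * x j) = (a + g) * x i + c * (\<Sum>k\<in>I. A i k * x k)"
    if "i \<in> I" for g i x
  proof -
    have "(\<Sum>j\<in>I. Mg g i j * x j) = (\<Sum>j\<in>I. (if j = i then (a + g) * x j else 0) + c * (A i j * x j))"
      by (intro sum.cong) (auto simp: Mg_def algebra_simps)
    also have "\<dots> = (a + g) * x i + c * (\<Sum>k\<in>I. A i k * x k)"
      using fin that by (simp add: sum.distrib sum_distrib_left)
    finally show ?thesis .
  qed
  have Mg_coer: "\<forall>x. (\<Sum>i\<in>I. \<Sum>j\<in>I. x i * Mg g i j * x j) \<ge> a * (\<Sum>i\<in>I. (x i)^2)"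
    if g: "g \<ge> 0" for g
  proof
    fix x :: "nat \<Rightarrow> real"
    have "(\<Sum>i\<in>I. \<Sum>j\<in>I. x i * Mg g i j * x j) = (\<Sum>i\<in>I. x i * (\<Sum>j\<in>I. Mg g i j * x j))"
      by (simp add: sum_distrib_left mult.assoc)
    also have "\<dots> = (\<Sum>i\<in>I. (a + g) * (x i)^2 + c * (\<Sum>k\<in>I. x i * A i k * x k))"
      using Mg_row by (intro sum.cong) (auto simp: power2_eq_square algebra_simps sum_distrib_left)
    also have "\<dots> = (a + g) * (\<Sum>i\<in>I. (x i)^2) + c * (\<Sum>i\<in>I. \<Sum>k\<in>I. x i * A i k * x k)"
      by (simp add: sum.distrib sum_distrib_left)
    also have "\<dots> \<ge> a * (\<Sum>i\<in>I. (x i)^2)"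
    proof -
      have "c * (\<Sum>i\<in>I. \<Sum>k\<in>I. x i * A i k * x k) \<ge> 0" using psd c by simp
      moreover have "g * (\<Sum>i\<in>I. (x i)^2) \<ge> 0" using g by (simp add: sum_nonneg)
      ultimately show ?thesis by (simp add: algebra_simps)
    qed
    finally show "(\<Sum>i\<in>I. \<Sum>j\<in>I. x i * Mg g i j * x j) \<ge> a * (\<Sum>i\<in>I. (x i)^2)" .
  qed
  define sol where "sol = (\<lambda>g. SOME x. \<forall>i\<in>I. (a + g) * x i + c * (\<Sum>k\<in>I. A i k * x k) = R i + g * u i)"
  have sol: "\<forall>i\<in>I. (a + g) * sol g i + c * (\<Sum>k\<in>I. A i k * sol g k) = R i + g * u i"
    if g: "g \<ge> 0" for g
  proof -
    obtain x where "\<forall>i\<in>I. (\<Sum>j\<in>I. Mg g i j * x j) = R i + g * u i"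
      using solve_coercive[OF fin a Mg_coer[OF g], where b="\<lambda>i. R i + g * u i"] by blast
    then have "\<forall>i\<in>I. (a + g) * x i + c * (\<Sum>k\<in>I. A i k * x k) = R i + g * u i"
      using Mg_row by simp
    then show ?thesis unfolding sol_def by (rule someI[where P="\<lambda>x. \<forall>i\<in>I. (a + g) * x i + c * (\<Sum>k\<in>I. A i k * x k) = R i + g * u i"])
  qed
  define Bd where "Bd = N R / a^2 + N u"
  have N0: "N x \<ge> 0" for x by (simp add: N_def sum_nonneg)
  have bound: "N (sol g) \<le> Bd" if g: "g \<ge> 0" for g
  proof -
    let ?x = "sol g"
    have "(a + g) * N ?x \<le> (\<Sum>i\<in>I. ?x i * (R i + g * u i))"
      unfolding N_def by (rule energy[OF psd c sol[OF g]])
    also have "\<dots> = (\<Sum>i\<in>I. ?x i * R i) + g * (\<Sum>i\<in>I. ?x i * u i)"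
      by (simp add: algebra_simps sum.distrib sum_distrib_left)
    also have "\<dots> \<le> (a / 2 * N ?x + N R / (2 * a)) + g * (1 / 2 * N ?x + N u / (2 * 1))"
      unfolding N_def by (intro add_mono mult_left_mono young_sum a g) auto
    finally have "(a + g) * N ?x \<le> (a / 2 * N ?x + N R / (2 * a)) + g * (1 / 2 * N ?x + N u / 2)"
      by simp
    then have h: "(a + g) * N ?x \<le> N R / a + g * N u" by (simp add: algebra_simps)
    have "N R / a + g * N u \<le> (a + g) * Bd"
    proof -
      have "N R / a = a * (N R / a^2)" using a by (simp add: power2_eq_square)
      moreover have "g * (N R / a^2) \<ge> 0" using g N0 by simp
      moreover have "a * N u \<ge> 0" using a N0 by simp
      moreover have "(a + g) * Bd = a * (N R / a^2) + g * (N R / a^2) + a * N u + g * N u"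
        unfolding Bd_def by (simp add: algebra_simps add_divide_distrib)
      ultimately show ?thesis by linarith
    qed
    with h have "(a + g) * N ?x \<le> (a + g) * Bd" by linarith
    then show ?thesis using a g by (simp add: mult_le_cancel_left_pos)
  qed
  define C where "C = (2 * N u + 2 * Bd) / a^2"
  have C0: "C \<ge> 0" using N0[of u] bound[of 0] N0[of "sol 0"] by (simp add: C_def)
  have lip: "N (\<lambda>i. sol g i - sol g' i) \<le> (g - g')^2 * C" if g: "g \<ge> 0" "g' \<ge> 0" for g g'
  proof -
    define z where "z = (\<lambda>i. sol g i - sol g' i)"
    define w where "w = (\<lambda>i. (g - g') * (u i - sol g' i))"
    have eqz: "\<forall>i\<in>I. (a + g) * z i + c * (\<Sum>k\<in>I. A i k * z k) = w i"
    proof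
      fix i assume i: "i \<in> I"
      have 1: "(a + g) * sol g i + c * (\<Sum>k\<in>I. A i k * sol g k) = R i + g * u i" using sol[OF g(1)] i by blast
      have 2: "(a + g') * sol g' i + c * (\<Sum>k\<in>I. A i k * sol g' k) = R i + g' * u i" using sol[OF g(2)] i by blast
      have zs: "(\<Sum>k\<in>I. A i k * z k) = (\<Sum>k\<in>I. A i k * sol g k) - (\<Sum>k\<in>I. A i k * sol g' k)"
        by (simp add: z_def algebra_simps sum_subtractf)
      define S1 where "S1 = (\<Sum>k\<in>I. A i k * sol g k)"
      define S2 where "S2 = (\<Sum>k\<in>I. A i k * sol g' k)"
      have 1: "(a + g) * sol g i + c * S1 = R i + g * u i" using 1 by (simp add: S1_def)
      have 2: "(a + g') * sol g' i + c * S2 = R i + g' * u i" using 2 by (simp add: S2_def)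
      have "(a + g) * z i + c * (\<Sum>k\<in>I. A i k * z k) = (a + g) * (sol g i - sol g' i) + c * (S1 - S2)"
        using zs by (simp add: z_def S1_def S2_def)
      also have "\<dots> = w i" using 1 2 unfolding w_def by (simp add: algebra_simps)
      finally show "(a + g) * z i + c * (\<Sum>k\<in>I. A i k * z k) = w i" .
    qed
    have "a * N z \<le> (a + g) * N z" using g N0[of z] by (simp add: mult_right_mono)
    also have "\<dots> \<le> (\<Sum>i\<in>I. z i * w i)" unfolding N_def by (rule energy[OF psd c eqz])
    also have "\<dots> \<le> a / 2 * N z + N w / (2 * a)" unfolding N_def by (rule young_sum[OF a])
    finally have "a * N z \<le> N w / a" by (simp add: field_simps)
    then have Nz: "N z \<le> N w / a^2" using a by (simp add: field_simps power2_eq_square)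
    have "N w = (g - g')^2 * N (\<lambda>i. u i - sol g' i)"
      by (simp add: N_def w_def power_mult_distrib sum_distrib_left)
    also have "N (\<lambda>i. u i - sol g' i) \<le> 2 * N u + 2 * Bd"
    proof -
      have "N (\<lambda>i. u i - sol g' i) \<le> (\<Sum>i\<in>I. 2 * (u i)^2 + 2 * (sol g' i)^2)"
        unfolding N_def
      proof (intro sum_mono)
        fix i
        have "0 \<le> (u i + sol g' i)^2" by simp
        then show "(u i - sol g' i)^2 \<le> 2 * (u i)^2 + 2 * (sol g' i)^2"
          by (simp add: power2_eq_square algebra_simps)
      qed
      also have "\<dots> = 2 * N u + 2 * N (sol g')" by (simp add: N_def sum.distrib sum_distrib_left)
      finally show ?thesis using bound[OF g(2)] by simp
    qed
    then have "(g - g')^2 * N (\<lambda>i. u i - sol g' i) \<le> (g - g')^2 * (2 * N u + 2 * Bd)"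
      by (simp add: mult_left_mono)
    finally have "N w \<le> (g - g')^2 * (2 * N u + 2 * Bd)" .
    then have "N w / a^2 \<le> (g - g')^2 * C" using a by (simp add: C_def divide_right_mono)
    with Nz show ?thesis by (simp add: z_def)
  qed
  have coordlip: "\<bar>sol g k - sol g' k\<bar> \<le> sqrt C * \<bar>g - g'\<bar>" if g: "g \<ge> 0" "g' \<ge> 0" and k: "k \<in> I" for g g' k
  proof -
    have "(sol g k - sol g' k)^2 \<le> N (\<lambda>i. sol g i - sol g' i)"
      unfolding N_def using fin k by (intro member_le_sum) auto
    also have "\<dots> \<le> (g - g')^2 * C" by (rule lip[OF g])
    finally have "sqrt ((sol g k - sol g' k)^2) \<le> sqrt ((g - g')^2 * C)" by (rule real_sqrt_le_mono)
    then show ?thesis by (simp add: real_sqrt_mult mult.commute)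
  qed
  have cont_sol: "continuous_on {0..} (\<lambda>g. sol g k)" if k: "k \<in> I" for k
  proof (rule lipschitz_on_continuous_on)
    show "(sqrt C)-lipschitz_on {0..} (\<lambda>g. sol g k)"
      by (rule lipschitz_onI) (use coordlip k C0 in \<open>auto simp: dist_real_def\<close>)
  qed
  have cont_comp: "continuous_on {0..} (\<lambda>s. sol (\<Gamma> s) k)" if k: "k \<in> I" for k
    by (rule continuous_on_compose2[OF cont_sol[OF k] \<Gamma>c]) (use \<Gamma>0 in auto)
  define \<psi> where "\<psi> = (\<lambda>s. s - \<phi> (sol (\<Gamma> s)))"
  have cont\<psi>: "continuous_on {0..} \<psi>"
    unfolding \<psi>_def \<phi>_def
    by (intro continuous_intros cont_comp)
  define C1 where "C1 = hh * (\<Sum>j\<in>I. (\<Sum>k\<in>I. \<bar>B j k\<bar> * sqrt Bd)^2)"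
  have \<phi>bound: "\<phi> (sol g) \<le> C1" if g: "g \<ge> 0" for g
  proof -
    have xk: "\<bar>sol g k\<bar> \<le> sqrt Bd" if k: "k \<in> I" for k
    proof -
      have "(sol g k)^2 \<le> N (sol g)" unfolding N_def using fin k by (intro member_le_sum) auto
      also have "\<dots> \<le> Bd" by (rule bound[OF g])
      finally show ?thesis using real_sqrt_le_mono by fastforce
    qed
    have "(\<Sum>k\<in>I. B j k * sol g k)^2 \<le> (\<Sum>k\<in>I. \<bar>B j k\<bar> * sqrt Bd)^2" for j
    proof -
      have "\<bar>\<Sum>k\<in>I. B j k * sol g k\<bar> \<le> (\<Sum>k\<in>I. \<bar>B j k * sol g k\<bar>)" by (rule sum_abs)
      also have "\<dots> \<le> (\<Sum>k\<in>I. \<bar>B j k\<bar> * sqrt Bd)"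
        using xk by (intro sum_mono) (auto simp: abs_mult intro: mult_left_mono)
      finally show ?thesis using power_mono[of "\<bar>\<Sum>k\<in>I. B j k * sol g k\<bar>" _ 2] by fastforce
    qed
    then show ?thesis unfolding \<phi>_def C1_def using hh by (intro mult_left_mono sum_mono) auto
  qed
  have \<phi>0: "\<phi> V \<ge> 0" for V unfolding \<phi>_def using hh by (simp add: sum_nonneg)
  have C10: "C1 \<ge> 0" using \<phi>0[of "sol 0"] \<phi>bound[of 0] by linarith
  have "\<exists>s. 0 \<le> s \<and> s \<le> C1 \<and> \<psi> s = 0"
  proof (rule IVT')
    show "\<psi> 0 \<le> 0" using \<phi>0 by (simp add: \<psi>_def)
    show "0 \<le> \<psi> C1" using \<phi>bound[of "\<Gamma> C1"] \<Gamma>0 C10 by (simp add: \<psi>_def)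
    show "0 \<le> C1" by (rule C10)
    show "continuous_on {0..C1} \<psi>" by (rule continuous_on_subset[OF cont\<psi>]) auto
  qed
  then obtain s where s: "s \<ge> 0" "\<psi> s = 0" by blast
  define V where "V = sol (\<Gamma> s)"
  have "\<phi> V = s" using s by (simp add: \<psi>_def V_def)
  then have "\<forall>j\<in>I. (a + \<Gamma> (\<phi> V)) * V j + c * (\<Sum>k\<in>I. A j k * V k) = R j + \<Gamma> (\<phi> V) * u j"
    using sol[of "\<Gamma> s"] \<Gamma>0 s(1) by (simp add: V_def)
  then show ?thesis unfolding \<phi>_def by blast
qed



definition Dm :: "nat \<Rightarrow> nat \<Rightarrow> nat \<Rightarrow> real" where
  "Dm J j k = (if j = k then -2 else if j = k + 1 \<or> k = j + 1 then 1 else 0) / (meshh J)^2"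

lemma Dm_sym: "Dm J j k = Dm J k j"
  by (auto simp: Dm_def)

lemma three_sum:
  assumes j: "j \<in> {1..J-1}"
  shows "(\<Sum>k\<in>{1..J-1}. Dm J j k * w k)
       = (-2 * w j + (if j \<ge> 2 then w (j - 1) else 0) + (if j + 1 \<le> J - 1 then w (j + 1) else 0)) / (meshh J)^2"
proof -
  let ?I = "{1..J-1}"
  have "(\<Sum>k\<in>?I. Dm J j k * w k)
      = (\<Sum>k\<in>?I. ((-2) * (if k = j then w k else 0) + (if k = j - 1 then w k else 0)
            + (if k = j + 1 then w k else 0)) / (meshh J)^2)"
    using j by (intro sum.cong refl) (auto simp: Dm_def)
  also have "\<dots> = ((-2) * (\<Sum>k\<in>?I. if k = j then w k else 0) + (\<Sum>k\<in>?I. if k = j - 1 then w k else 0)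
            + (\<Sum>k\<in>?I. if k = j + 1 then w k else 0)) / (meshh J)^2"
    by (simp only: sum_divide_distrib[symmetric] sum.distrib sum_distrib_left[symmetric])
  also have "(\<Sum>k\<in>?I. if k = j then w k else 0) = w j" using j by (subst sum.delta) auto
  also have "(\<Sum>k\<in>?I. if k = j - 1 then w k else 0) = (if j \<ge> 2 then w (j - 1) else 0)"
    using j by (subst sum.delta) auto
  also have "(\<Sum>k\<in>?I. if k = j + 1 then w k else 0) = (if j + 1 \<le> J - 1 then w (j + 1) else 0)"
    using j by (subst sum.delta) auto
  finally show ?thesis .
qed

lemma nat_aux: "nat (int j + 1) = Suc j" "nat (int j + 2) = Suc (Suc j)"
  "j \<ge> 1 \<Longrightarrow> nat (int j - 1) = j - 1" "j \<ge> 2 \<Longrightarrow> nat (int j - 2) = j - 2"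
  by linarith+

lemma g0: "j \<in> {1..J-1} \<Longrightarrow> gext J W (int j) = W j"
  by (auto simp: gext_def)
lemma gp1: "j \<in> {1..J-1} \<Longrightarrow> gext J W (int j + 1) = (if j + 1 \<le> J - 1 then W (j + 1) else 0)"
  by (auto simp: gext_def nat_aux)
lemma gm1: "j \<in> {1..J-1} \<Longrightarrow> gext J W (int j - 1) = (if j \<ge> 2 then W (j - 1) else 0)"
  by (auto simp: gext_def nat_aux)
lemma gp2: "j \<in> {1..J-1} \<Longrightarrow> gext J W (int j + 2) = (if j + 2 \<le> J - 1 then W (j + 2) else if j + 2 = J then 0 else - W j)"
proof -
  assume j: "j \<in> {1..J-1}"
  show ?thesis
  proof (cases "j + 2 \<le> J - 1")
    case True then show ?thesis using j by (auto simp: gext_def nat_aux)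
  next
    case False
    then have "j + 2 = J \<or> j + 1 = J" using j by auto
    then show ?thesis
    proof
      assume "j + 2 = J" then show ?thesis using j by (auto simp: gext_def)
    next
      assume h: "j + 1 = J" then have "J - 1 = j" by auto
      then show ?thesis using j h by (auto simp: gext_def)
    qed
  qed
qed
lemma gm2: "j \<in> {1..J-1} \<Longrightarrow> gext J W (int j - 2) = (if j \<ge> 3 then W (j - 2) else if j = 2 then 0 else - W j)"
proof -
  assume j: "j \<in> {1..J-1}"
  show ?thesis
  proof (cases "j \<ge> 3")
    case True then show ?thesis using j by (auto simp: gext_def nat_aux)
  next
    case False
    then have "j = 2 \<or> j = 1" using j by auto
    then show ?thesis by (auto simp: gext_def)
  qed
qed

lemma dxx_rep:
  assumes j: "j \<in> {1..J-1}"
  shows "dxx J V j = (\<Sum>k\<in>{1..J-1}. Dm J j k * V k)"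
  unfolding three_sum[OF j] dxx_def g0[OF j] gp1[OF j] gm1[OF j]
  by simp

lemma dxxxx_rep:
  assumes j: "j \<in> {1..J-1}"
  shows "dxxxx J V j = (\<Sum>l\<in>{1..J-1}. Dm J j l * dxx J V l)"
proof -
  have A: "dxx J V j = (gext J V (int j + 1) - 2 * V j + gext J V (int j - 1)) / (meshh J)^2"
    unfolding dxx_def g0[OF j] ..
  have B: "dxx J V (j - 1) = (V j - 2 * V (j - 1) + gext J V (int j - 2)) / (meshh J)^2" if j2: "j \<ge> 2"
  proof -
    have i: "j - 1 \<in> {1..J-1}" using j j2 by auto
    have e1: "int (j - 1) + 1 = int j" "int (j - 1) - 1 = int j - 2" using j2 by auto
    show ?thesis unfolding dxx_def e1 g0[OF i] g0[OF j] ..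
  qed
  have C: "dxx J V (j + 1) = (gext J V (int j + 2) - 2 * V (j + 1) + V j) / (meshh J)^2" if j2: "j + 1 \<le> J - 1"
  proof -
    have i: "j + 1 \<in> {1..J-1}" using j j2 by auto
    have e1: "int (j + 1) + 1 = int j + 2" "int (j + 1) - 1 = int j" by auto
    show ?thesis unfolding dxx_def e1 g0[OF i] g0[OF j] ..
  qed
  have hne: "meshh J \<noteq> 0" using j by (auto simp: meshh_def)
  show ?thesis
    using hne unfolding three_sum[OF j] dxxxx_def g0[OF j] gp1[OF j] gm1[OF j] gp2[OF j] gm2[OF j] A
    using j B C hne by (auto simp: gp1[OF j] gm1[OF j] gp2[OF j] gm2[OF j] field_simps)
qed



definition Am :: "nat \<Rightarrow> nat \<Rightarrow> nat \<Rightarrow> real" where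
  "Am J j k = (\<Sum>l\<in>{1..J-1}. Dm J j l * Dm J l k)"

lemma dxxxx_A:
  assumes j: "j \<in> {1..J-1}"
  shows "dxxxx J V j = (\<Sum>k\<in>{1..J-1}. Am J j k * V k)"
proof -
  have "dxxxx J V j = (\<Sum>l\<in>{1..J-1}. Dm J j l * (\<Sum>k\<in>{1..J-1}. Dm J l k * V k))"
    unfolding dxxxx_rep[OF j] by (intro sum.cong refl) (simp add: dxx_rep)
  also have "\<dots> = (\<Sum>k\<in>{1..J-1}. Am J j k * V k)"
    unfolding Am_def by (simp add: sum_distrib_left sum_distrib_right mult.assoc) (rule sum.swap)
  finally show ?thesis .
qed

lemma Am_psd: "(\<Sum>i\<in>{1..J-1}. \<Sum>j\<in>{1..J-1}. x i * Am J i j * x j) \<ge> 0"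
proof -
  let ?I = "{1..J-1}"
  have "(\<Sum>i\<in>?I. \<Sum>j\<in>?I. x i * Am J i j * x j)
      = (\<Sum>i\<in>?I. \<Sum>j\<in>?I. \<Sum>l\<in>?I. (Dm J l i * x i) * (Dm J l j * x j))"
    unfolding Am_def sum_distrib_left sum_distrib_right
  proof (intro sum.cong refl)
    fix i j l
    show "x i * (Dm J i l * Dm J l j) * x j = Dm J l i * x i * (Dm J l j * x j)"
      by (simp add: Dm_sym[of J i l])
  qed
  also have "\<dots> = (\<Sum>i\<in>?I. \<Sum>l\<in>?I. \<Sum>j\<in>?I. (Dm J l i * x i) * (Dm J l j * x j))"
    by (rule sum.cong[OF refl]) (rule sum.swap)
  also have "\<dots> = (\<Sum>l\<in>?I. \<Sum>i\<in>?I. \<Sum>j\<in>?I. (Dm J l i * x i) * (Dm J l j * x j))"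
    by (rule sum.swap)
  also have "\<dots> = (\<Sum>l\<in>?I. (\<Sum>i\<in>?I. Dm J l i * x i) * (\<Sum>j\<in>?I. Dm J l j * x j))"
    by (simp add: sum_product)
  also have "\<dots> \<ge> 0" by (intro sum_nonneg) simp
  finally show ?thesis .
qed



lemma level_exists:
  assumes S1: "assm_S1 G" and kern: "kernel_K1 \<beta> \<or> kernel_K2 \<beta>" and K0: "Kker \<beta> 0 < 1"
    and dt: "dt > 0" and n: "n \<ge> 2"
  shows "\<exists>V. FD_level G \<beta> f J dt (U(n := V)) n"
proof -
  let ?I = "{1..J-1}"
  define Av where "Av = (\<lambda>X j. \<Sum>k\<in>?I. Am J j k * X k)"
  define w where "w = wts \<beta> dt n n"
  define \<mu> where "\<mu> = 1 - Kker \<beta> 0"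
  define u where "u = U (n - 1)"
  define u2 where "u2 = U (n - 1 - 1)"
  define S where "S = (\<lambda>j. \<Sum>p = 1..n - 1. wts \<beta> dt n p * dxxxx J (dtU dt U p) j)"
  define F where "F = (\<lambda>j. f (real j * meshh J) (real n * dt) - Kker \<beta> (real n * dt) * dxxxx J (U 0) j)"
  define R where "R = (\<lambda>j. F j - S j + (2 * u j - u2 j) / dt^2 + (w / dt) * Av u j)"
  define c where "c = \<mu> + w / dt"
  have c: "c \<ge> 0"
  proof -
    have "w \<ge> (Kker \<beta> 0 - 1) * dt" unfolding w_def using wts_lower[OF kern K0 dt] n by simp
    then have "w / dt \<ge> Kker \<beta> 0 - 1" using dt by (simp add: field_simps)
    then show ?thesis by (simp add: c_def \<mu>_def)
  qed
  have Gc: "continuous_on {0..} G" and Gpos: "\<forall>v\<ge>0. G v > 0" using S1 by (auto simp: assm_S1_def)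
  have hh: "meshh J \<ge> 0" by (simp add: meshh_def)
  obtain V where V: "\<forall>j\<in>?I. (1 / dt^2 + G (meshh J * (\<Sum>j\<in>?I. (\<Sum>k\<in>?I. Dm J j k * V k)^2)) / dt) * V j
                   + c * (\<Sum>k\<in>?I. Am J j k * V k)
               = R j + G (meshh J * (\<Sum>j\<in>?I. (\<Sum>k\<in>?I. Dm J j k * V k)^2)) / dt * u j"
  proof -
    have "\<exists>V. \<forall>j\<in>?I. (1 / dt^2 + (\<lambda>s. G s / dt) (meshh J * (\<Sum>j\<in>?I. (\<Sum>k\<in>?I. Dm J j k * V k)^2))) * V j
                   + c * (\<Sum>k\<in>?I. Am J j k * V k)
               = R j + (\<lambda>s. G s / dt) (meshh J * (\<Sum>j\<in>?I. (\<Sum>k\<in>?I. Dm J j k * V k)^2)) * u j"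
    proof (rule abstract_exists)
      show "finite ?I" by simp
      show "1 / dt^2 > 0" using dt by simp
      show "c \<ge> 0" by (rule c)
      show "meshh J \<ge> 0" by (rule hh)
      show "\<forall>x. (\<Sum>i\<in>?I. \<Sum>j\<in>?I. x i * Am J i j * x j) \<ge> 0" using Am_psd by blast
      show "continuous_on {0..} (\<lambda>s. G s / dt)" using Gc dt by (intro continuous_intros) auto
      show "\<forall>s\<ge>0. G s / dt \<ge> 0" using Gpos dt by (auto intro: less_imp_le)
    qed
    then show ?thesis using that by auto
  qed
  define U' where "U' = U(n := V)"
  have U'n: "U' n = V" by (simp add: U'_def)
  have U'n1: "U' (n - 1) = u" using n by (auto simp: U'_def u_def)
  have U'n2: "U' (n - 1 - 1) = u2" using n by (auto simp add: U'_def u2_def)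
  have U'0: "U' 0 = U 0" using n by (auto simp add: U'_def)
  have dtn: "dtU dt U' n = (\<lambda>j. (V j - u j) / dt)" using U'n U'n1 by (simp add: dtU_def)
  have dtn1: "dtU dt U' (n - 1) = (\<lambda>j. (u j - u2 j) / dt)" using U'n1 U'n2 by (simp add: dtU_def)
  have dtp: "dtU dt U' p = dtU dt U p" if "p \<in> {1..n-1}" for p
    using that n by (auto simp: dtU_def U'_def)
  obtain m where m: "n = Suc m" using n by (cases n) auto
  have sumsplit: "(\<Sum>p = 1..n. wts \<beta> dt n p * dxxxx J (dtU dt U' p) j)
      = S j + w * dxxxx J (\<lambda>j. (V j - u j) / dt) j" for j
  proof -
    have "(\<Sum>p = 1..n. wts \<beta> dt n p * dxxxx J (dtU dt U' p) j)
        = (\<Sum>p = 1..n-1. wts \<beta> dt n p * dxxxx J (dtU dt U' p) j) + wts \<beta> dt n n * dxxxx J (dtU dt U' n) j"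
      using m by simp
    also have "(\<Sum>p = 1..n-1. wts \<beta> dt n p * dxxxx J (dtU dt U' p) j) = S j"
      unfolding S_def using dtp by (intro sum.cong refl) simp
    finally show ?thesis by (simp add: w_def dtn)
  qed
  have norm: "(dnorm J (dxx J V))^2 = meshh J * (\<Sum>j\<in>?I. (\<Sum>k\<in>?I. Dm J j k * V k)^2)"
  proof -
    have "dinner J (dxx J V) (dxx J V) \<ge> 0" unfolding dinner_def using hh
      by (simp add: sum_nonneg)
    then have "(dnorm J (dxx J V))^2 = dinner J (dxx J V) (dxx J V)" by (simp add: dnorm_def)
    also have "\<dots> = meshh J * (\<Sum>j\<in>?I. (\<Sum>k\<in>?I. Dm J j k * V k)^2)"
      unfolding dinner_def by (simp add: dxx_rep power2_eq_square)
    finally show ?thesis .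
  qed
  have "FD_level G \<beta> f J dt U' n"
    unfolding FD_level_def
  proof
    fix j assume j: "j \<in> ?I"
    define g where "g = G (meshh J * (\<Sum>j\<in>?I. (\<Sum>k\<in>?I. Dm J j k * V k)^2))"
    have Vj: "(1 / dt^2 + g / dt) * V j + c * Av V j = R j + g / dt * u j"
      using V j by (simp add: g_def Av_def)
    have lin: "dxxxx J (\<lambda>j. (V j - u j) / dt) j = (Av V j - Av u j) / dt"
      unfolding dxxxx_A[OF j] Av_def
      by (simp add: sum_divide_distrib[symmetric] sum_subtractf[symmetric] algebra_simps)
    have AV: "dxxxx J V j = Av V j" unfolding dxxxx_A[OF j] Av_def ..
    show "(dtU dt U' n j - dtU dt U' (n - 1) j) / dt + G ((dnorm J (dxx J (U' n)))\<^sup>2) * dtU dt U' n j +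
          (1 - Kker \<beta> 0) * dxxxx J (U' n) j + (\<Sum>p = 1..n. wts \<beta> dt n p * dxxxx J (dtU dt U' p) j) =
          f (real j * meshh J) (real n * dt) - Kker \<beta> (real n * dt) * dxxxx J (U' 0) j"
      unfolding sumsplit lin U'n U'0 norm dtn dtn1 AV g_def[symmetric] \<mu>_def[symmetric]
      using Vj dt
      by (simp add: R_def F_def c_def field_simps power2_eq_square)
  qed
  then show ?thesis unfolding U'_def by blast
qed


primrec Sq :: "(nat \<Rightarrow> nat \<Rightarrow> real) \<Rightarrow> ((nat \<Rightarrow> nat \<Rightarrow> real) \<Rightarrow> nat \<Rightarrow> (nat \<Rightarrow> nat \<Rightarrow> real))
    \<Rightarrow> nat \<Rightarrow> (nat \<Rightarrow> nat \<Rightarrow> real)" where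
  "Sq b stp 0 = b"
| "Sq b stp (Suc k) = stp (Sq b stp k) (k + 2)"

lemma Sq_stable:
  assumes loc: "\<And>W m i. i \<noteq> m \<Longrightarrow> stp W m i = W i"
  shows "i \<le> k + 1 \<Longrightarrow> Sq b stp (k + d) i = Sq b stp k i"
proof (induction d)
  case 0 then show ?case by simp
next
  case (Suc d)
  have "Sq b stp (k + Suc d) i = stp (Sq b stp (k + d)) (k + d + 2) i" by simp
  also have "\<dots> = Sq b stp (k + d) i" using Suc.prems by (intro loc) auto
  finally show ?case using Suc by simp
qed

lemma FD_cong:
  assumes "\<And>i. i \<le> n \<Longrightarrow> U i = U' i"
  shows "FD_level G \<beta> f J dt U n = FD_level G \<beta> f J dt U' n"
proof -
  have s: "(\<Sum>p = 1..n. wts \<beta> dt n p * dxxxx J (dtU dt U p) j) = (\<Sum>p = 1..n. wts \<beta> dt n p * dxxxx J (dtU dt U' p) j)" for j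
  proof (intro sum.cong refl)
    fix p assume p: "p \<in> {1..n}"
    have "U p = U' p" "U (p - 1) = U' (p - 1)" using p assms by auto
    then show "wts \<beta> dt n p * dxxxx J (dtU dt U p) j = wts \<beta> dt n p * dxxxx J (dtU dt U' p) j"
      by (simp add: dtU_def)
  qed
  show ?thesis unfolding FD_level_def s by (simp add: dtU_def assms)
qed

theorem theorem3p2:
  fixes G \<beta> :: "real \<Rightarrow> real"
    and f :: "real \<Rightarrow> real \<Rightarrow> real"
    and J :: nat and dt :: real and N :: enat
    and U0 U1 :: "nat \<Rightarrow> real"
  assumes S1: "assm_S1 G"
    and kernel: "kernel_K1 \<beta> \<or> kernel_K2 \<beta>"
    and K0: "Kker \<beta> 0 < 1"
    and J: "J \<ge> 1"
    and dt: "dt > 0"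
  shows "(\<forall>n \<ge> 2. \<forall>U :: nat \<Rightarrow> nat \<Rightarrow> real. \<exists>V :: nat \<Rightarrow> real.
            FD_level G \<beta> f J dt (U(n := V)) n)
         \<and> (\<exists>U :: nat \<Rightarrow> nat \<Rightarrow> real.
              (\<forall>j \<in> {1..J - 1}. U 0 j = U0 j \<and> U 1 j = U1 j) \<and>
              (\<forall>n. 2 \<le> n \<and> enat n \<le> N \<longrightarrow> FD_level G \<beta> f J dt U n))"
proof
  have lev: "\<And>n U. n \<ge> 2 \<Longrightarrow> \<exists>V. FD_level G \<beta> f J dt (U(n := V)) n"
    using level_exists[OF S1 kernel K0 dt] by blast
  then show "\<forall>n \<ge> 2. \<forall>U :: nat \<Rightarrow> nat \<Rightarrow> real. \<exists>V :: nat \<Rightarrow> real.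
            FD_level G \<beta> f J dt (U(n := V)) n" by blast
  define stp where "stp = (\<lambda>(W::nat \<Rightarrow> nat \<Rightarrow> real) m. W(m := SOME V. FD_level G \<beta> f J dt (W(m := V)) m))"
  define b where "b = (\<lambda>i::nat. if i = 0 then U0 else U1)"
  have loc: "\<And>W m i. i \<noteq> m \<Longrightarrow> stp W m i = W i" by (simp add: stp_def)
  define U where "U = (\<lambda>i. Sq b stp i i)"
  have agree: "U i = Sq b stp (n - 1) i" if "i \<le> n" "n \<ge> 2" for i n
  proof (cases "i = n")
    case True
    have "Sq b stp ((n - 1) + 1) n = Sq b stp (n - 1) n"
      using that by (intro Sq_stable[where stp=stp, OF loc]) auto
    then show ?thesis using True that by (simp add: U_def)
  next
    case False
    have "Sq b stp (i + (n - 1 - i)) i = Sq b stp i i"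
      by (intro Sq_stable[where stp=stp, OF loc]) auto
    then show ?thesis using False that by (simp add: U_def)
  qed
  have fd: "FD_level G \<beta> f J dt U n" if n: "n \<ge> 2" for n
  proof -
    obtain k where k: "n = Suc (Suc k)" using n by (metis add_2_eq_Suc le_Suc_ex)
    have "Sq b stp (n - 1) = stp (Sq b stp k) n" using k by simp
    moreover have "stp (Sq b stp k) n = (Sq b stp k)(n := SOME V. FD_level G \<beta> f J dt ((Sq b stp k)(n := V)) n)"
      by (simp add: stp_def)
    moreover have "FD_level G \<beta> f J dt ((Sq b stp k)(n := SOME V. FD_level G \<beta> f J dt ((Sq b stp k)(n := V)) n)) n"
      by (rule someI_ex[OF lev[OF n, of "Sq b stp k"]])
    ultimately have "FD_level G \<beta> f J dt (Sq b stp (n - 1)) n" by simp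
    moreover have "FD_level G \<beta> f J dt U n = FD_level G \<beta> f J dt (Sq b stp (n - 1)) n"
      using agree n by (intro FD_cong) auto
    ultimately show ?thesis by simp
  qed
  have U0: "U 0 = U0" by (simp add: U_def b_def)
  have "Sq b stp (0 + 1) 1 = Sq b stp 0 1" by (intro Sq_stable[where stp=stp, OF loc]) auto
  then have U1: "U 1 = U1" by (simp add: U_def b_def)
  show "\<exists>U :: nat \<Rightarrow> nat \<Rightarrow> real.
              (\<forall>j \<in> {1..J - 1}. U 0 j = U0 j \<and> U 1 j = U1 j) \<and>
              (\<forall>n. 2 \<le> n \<and> enat n \<le> N \<longrightarrow> FD_level G \<beta> f J dt U n)"
    using U0 U1 fd by blast
qed

end
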